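(* Let $s\in[-\infty,0]$, let $\rho$ be a $2\times2$ density matrix and $X,Y$ be $2\times2$ Hermitian matrices. Then $|\operatorname{Re}\zeta_\rho^s(X,Y)|^2\le I^s(\rho,X)\,I^s(\rho,Y)\le|\zeta_\rho^s(X,Y)|^2,$ where $\operatorname{Re}\zeta_\rho^s(X,Y)=\frac14\left(I^s(\rho,X+Y)-I^s(\rho,X-Y)\right)$ and $\operatorname{Im}\zeta_\rho^s(X,Y)=\frac{1}{2i}\mathrm{Tr}\big[\rho[X,Y]\big]$.
   Context: Write $\rho=\sum_{i=1}^2\lambda_i|\psi_i\rangle\langle\psi_i|$ (orthonormal eigenbasis, $\lambda_1\ge\lambda_2\ge0$). For $-\infty<s<0$ and $a_1,a_2>0$ let $m_s(a_1,a_2)=\left(\frac{a_1^s+a_2^s}{2}\right)^{1/s}$; $m_0(a_1,a_2)=\sqrt{a_1a_2}$; $m_{-\infty}(a_1,a_2)=\min\{a_1,a_2\}$; and $m_s(a,0)=m_s(0,a)=m_s(0,0)=0$. Define $\zeta_\rho^s(X,Y)=\mathrm{Tr}[\rho X^\dagger Y]-\sum_{i,j} m_s(\lambda_i,\lambda_j)\langle\psi_i|X^\dagger|\psi_j\rangle\langle\psi_j|Y|\psi_i\rangle$ and $I^s(\rho,X)=\zeta_\rho^s(X,X)$. $[X,Y]=XY-YX$. *)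

theory Defs
  imports "HOL-Analysis.Analysis"
begin

definition cadj :: "complex^2^2 \<Rightarrow> complex^2^2" where
  "cadj A = (\<chi> i j. cnj (A $ j $ i))"

definition ctrace :: "complex^2^2 \<Rightarrow> complex" where
  "ctrace A = (\<Sum>i\<in>UNIV. A $ i $ i)"

definition hermitian2 :: "complex^2^2 \<Rightarrow> bool" where
  "hermitian2 A \<longleftrightarrow> cadj A = A"

definition braket :: "complex^2 \<Rightarrow> complex^2^2 \<Rightarrow> complex^2 \<Rightarrow> complex" where
  "braket u A v = (\<Sum>i\<in>UNIV. cnj (u $ i) * (A *v v) $ i)"

definition cinner2 :: "complex^2 \<Rightarrow> complex^2 \<Rightarrow> complex" where
  "cinner2 u v = (\<Sum>i\<in>UNIV. cnj (u $ i) * v $ i)"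

definition ketbra :: "complex^2 \<Rightarrow> complex^2 \<Rightarrow> complex^2^2" where
  "ketbra u v = (\<chi> i j. u $ i * cnj (v $ j))"

definition psd2 :: "complex^2^2 \<Rightarrow> bool" where
  "psd2 A \<longleftrightarrow> hermitian2 A \<and> (\<forall>v. 0 \<le> Re (braket v A v))"

definition density2 :: "complex^2^2 \<Rightarrow> bool" where
  "density2 \<rho> \<longleftrightarrow> psd2 \<rho> \<and> ctrace \<rho> = 1"

definition msmean :: "ereal \<Rightarrow> real \<Rightarrow> real \<Rightarrow> real" where
  "msmean s a b =
     (if a = 0 \<or> b = 0 then 0
      else if s = -\<infinity> then min a b
      else if s = 0 then sqrt (a * b)
      else ((a powr real_of_ereal s + b powr real_of_ereal s) / 2) powr (1 / real_of_ereal s))"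

text \<open>\<zeta>_\<rho>^s(X,Y), where \<rho> = \<Sum>_{i\<in>{1,2}} lam i |psi i\<rangle>\<langle>psi i|.\<close>
definition zeta :: "ereal \<Rightarrow> complex^2^2 \<Rightarrow> (nat \<Rightarrow> real) \<Rightarrow> (nat \<Rightarrow> complex^2)
                    \<Rightarrow> complex^2^2 \<Rightarrow> complex^2^2 \<Rightarrow> complex" where
  "zeta s \<rho> lam psi X Y =
     ctrace (\<rho> ** cadj X ** Y)
     - (\<Sum>i\<in>{1,2}. \<Sum>j\<in>{1,2}. complex_of_real (msmean s (lam i) (lam j))
           * braket (psi i) (cadj X) (psi j) * braket (psi j) Y (psi i))"

definition Is :: "ereal \<Rightarrow> complex^2^2 \<Rightarrow> (nat \<Rightarrow> real) \<Rightarrow> (nat \<Rightarrow> complex^2)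
                    \<Rightarrow> complex^2^2 \<Rightarrow> complex" where
  "Is s \<rho> lam psi X = zeta s \<rho> lam psi X X"

end

theory Submission imports Defs begin

lemma complete2:
  fixes p q :: "complex^2"
  assumes "cinner2 p p = 1" "cinner2 q q = 1" "cinner2 p q = 0" "cinner2 q p = 0"
  shows "p $ i * cnj (p $ j) + q $ i * cnj (q $ j) = (if i = j then 1 else 0)"
proof -
  define U :: "complex^2^2" where "U = (\<chi> i k. if k = 1 then p $ i else q $ i)"
  have "cadj U ** U = mat 1"
    using assms unfolding U_def cadj_def cinner2_def
    by (simp add: matrix_matrix_mult_def vec_eq_iff forall_2 sum_2 mat_def mult.commute)
  hence "U ** cadj U = mat 1" using matrix_left_right_inverse by blast
  hence "(U ** cadj U) $ i $ j = mat 1 $ i $ j" by simp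
  thus ?thesis unfolding U_def cadj_def
    by (simp add: matrix_matrix_mult_def sum_2 mat_def)
qed



lemma ctrace_rho:
  fixes p q :: "complex^2" and A :: "complex^2^2"
  shows "ctrace ((l1 *\<^sub>R ketbra p p + l2 *\<^sub>R ketbra q q) ** A) = l1 * braket p A p + l2 * braket q A q"
  unfolding ctrace_def braket_def ketbra_def
  apply (simp add: matrix_matrix_mult_def matrix_vector_mult_def sum_2)
  by (simp add: scaleR_conv_of_real algebra_simps)

lemma braket_adj: "braket v (cadj A) u = cnj (braket u A v)"
  unfolding braket_def cadj_def
  by (simp add: matrix_vector_mult_def sum_2 algebra_simps)

lemma braket_add: "braket u (A + B) v = braket u A v + braket u B v"
  unfolding braket_def
  by (simp add: matrix_vector_mult_def sum_2 algebra_simps)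

lemma braket_diff: "braket u (A - B) v = braket u A v - braket u B v"
  unfolding braket_def
  by (simp add: matrix_vector_mult_def sum_2 algebra_simps)

lemma herm_add: "hermitian2 A \<Longrightarrow> hermitian2 B \<Longrightarrow> hermitian2 (A + B)"
  unfolding hermitian2_def cadj_def by (simp add: vec_eq_iff)
lemma herm_diff: "hermitian2 A \<Longrightarrow> hermitian2 B \<Longrightarrow> hermitian2 (A - B)"
  unfolding hermitian2_def cadj_def by (simp add: vec_eq_iff)

lemma braket_mult:
  fixes p q :: "complex^2"
  assumes "\<And>i j. p $ i * cnj (p $ j) + q $ i * cnj (q $ j) = (if i = j then 1 else 0)"
  shows "braket u (A ** B) v = braket u A p * braket p B v + braket u A q * braket q B v"
proof -
  have h11: "p $ 1 * cnj (p $ 1) + q $ 1 * cnj (q $ 1) = 1" using assms[of 1 1] by simp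
  have h22: "p $ 2 * cnj (p $ 2) + q $ 2 * cnj (q $ 2) = 1" using assms[of 2 2] by simp
  have h12: "p $ 1 * cnj (p $ 2) + q $ 1 * cnj (q $ 2) = 0" using assms[of 1 2] by simp
  have h21: "p $ 2 * cnj (p $ 1) + q $ 2 * cnj (q $ 1) = 0" using assms[of 2 1] by simp
  show ?thesis
    unfolding braket_def
    apply (simp add: matrix_vector_mult_def matrix_matrix_mult_def sum_2)
    using h11 h22 h12 h21 by algebra
qed



lemma msmean_same: assumes "s \<le> 0" "a \<ge> 0" shows "msmean s a a = a"
proof -
  have "s \<noteq> \<infinity>" using assms by auto
  show ?thesis
  proof (cases "a = 0 \<or> s = -\<infinity> \<or> s = 0")
    case True thus ?thesis using assms by (auto simp: msmean_def)
  next
    case False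
    then obtain t where t: "s = ereal t" "t \<noteq> 0" using \<open>s \<noteq> \<infinity>\<close> by (cases s) auto
    have "msmean s a a = (a powr t) powr (1/t)" using False t by (simp add: msmean_def)
    also have "\<dots> = a" using t False assms by (simp add: powr_powr)
    finally show ?thesis .
  qed
qed

lemma msmean_sym: "msmean s a b = msmean s b a"
  unfolding msmean_def by (simp add: add.commute mult.commute min.commute)

lemma msmean_bounds: assumes "s \<le> 0" "0 \<le> b" "b \<le> a"
  shows "b \<le> msmean s a b \<and> msmean s a b \<le> a"
proof (cases "b = 0")
  case True thus ?thesis using assms by (simp add: msmean_def)
next
  case b0: False
  hence bp: "b > 0" using assms by auto
  hence ap: "a > 0" using assms by auto
  have "s \<noteq> \<infinity>" using assms by auto
  show ?thesis
  proof (cases "s = -\<infinity> \<or> s = 0")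
    case True
    moreover have "b \<le> sqrt (a*b)"
    proof -
      have "b*b \<le> a*b" using assms bp by (simp add: mult_right_mono)
      hence "sqrt (b*b) \<le> sqrt (a*b)" by (rule real_sqrt_le_mono)
      thus ?thesis using bp by simp
    qed
    moreover have "sqrt (a*b) \<le> a"
    proof -
      have "a*b \<le> a*a" using assms ap by (simp add: mult_left_mono)
      hence "sqrt (a*b) \<le> sqrt (a*a)" by (rule real_sqrt_le_mono)
      thus ?thesis using ap by simp
    qed
    ultimately show ?thesis using assms b0 by (auto simp: msmean_def)
  next
    case False
    then obtain t where t: "s = ereal t" "t < 0" using \<open>s \<noteq> \<infinity>\<close> assms(1) by (cases s) auto
    have m: "msmean s a b = ((a powr t + b powr t)/2) powr (1/t)" using False t b0 ap by (simp add: msmean_def)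
    have ab: "a powr t \<le> b powr t" using powr_mono2'[of t b a] t bp assms by simp
    define M where "M = (a powr t + b powr t)/2"
    have M1: "a powr t \<le> M" "M \<le> b powr t" using ab unfolding M_def by auto
    have pa: "a powr t > 0" using ap by simp
    have "M powr (1/t) \<le> (a powr t) powr (1/t)"
      using powr_mono2'[of "1/t" "a powr t" M] t M1 pa by simp
    also have "\<dots> = a" using t ap by (simp add: powr_powr)
    finally have 1: "M powr (1/t) \<le> a" .
    have "b = (b powr t) powr (1/t)" using t bp by (simp add: powr_powr)
    also have "\<dots> \<le> M powr (1/t)"
      using powr_mono2'[of "1/t" M "b powr t"] t M1 pa by simp
    finally have 2: "b \<le> M powr (1/t)" .
    show ?thesis using 1 2 m M_def by simp
  qed
qed



lemma zeta_formula:
  fixes s :: ereal and \<rho> A B :: "complex^2^2"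
    and lam :: "nat \<Rightarrow> real" and psi :: "nat \<Rightarrow> complex^2"
  assumes "s \<le> 0" "hermitian2 A"
    and comp: "\<And>i j. psi 1 $ i * cnj (psi 1 $ j) + psi 2 $ i * cnj (psi 2 $ j) = (if i = j then 1 else 0)"
    and "lam 1 \<ge> lam 2" and "lam 2 \<ge> 0"
    and rho: "\<rho> = lam 1 *\<^sub>R ketbra (psi 1) (psi 1) + lam 2 *\<^sub>R ketbra (psi 2) (psi 2)"
  shows "zeta s \<rho> lam psi A B =
    complex_of_real (lam 1 - msmean s (lam 1) (lam 2)) * braket (psi 1) A (psi 2) * braket (psi 2) B (psi 1)
  + complex_of_real (lam 2 - msmean s (lam 1) (lam 2)) * braket (psi 2) A (psi 1) * braket (psi 1) B (psi 2)"
proof -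
  have cA: "cadj A = A" using assms unfolding hermitian2_def by simp
  have m1: "msmean s (lam 1) (lam 1) = lam 1" using assms by (intro msmean_same) auto
  have m2: "msmean s (lam 2) (lam 2) = lam 2" using assms by (intro msmean_same) auto
  have ms: "msmean s (lam 2) (lam 1) = msmean s (lam 1) (lam 2)" by (rule msmean_sym)
  have tr: "ctrace (\<rho> ** A ** B) = lam 1 * braket (psi 1) (A ** B) (psi 1) + lam 2 * braket (psi 2) (A ** B) (psi 2)"
    unfolding rho matrix_mul_assoc[symmetric] by (rule ctrace_rho)
  have S2: "\<And>f. (\<Sum>i\<in>{1::nat,2}. f i) = f 1 + (f 2 :: complex)" by simp
  show ?thesis
    unfolding zeta_def cA tr braket_mult[OF comp] S2 m1 m2 ms
    by (simp add: algebra_simps)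
qed



lemma final_alg:
  fixes a b l1 l2 :: real and u v :: complex
  assumes ab: "a \<ge> 0" "b \<le> 0" and dl: "a - b = l1 - l2"
  defines "Z \<equiv> complex_of_real a * u * cnj v + complex_of_real b * cnj u * v"
  defines "I \<equiv> \<lambda>w. complex_of_real a * w * cnj w + complex_of_real b * cnj w * w"
  shows "(Re Z)\<^sup>2 \<le> Re (I u) * Re (I v)
       \<and> Re (I u) * Re (I v) \<le> (cmod Z)\<^sup>2
       \<and> complex_of_real (Re Z) = (I (u + v) - I (u - v)) / 4
       \<and> complex_of_real (Im Z) = (complex_of_real l1 * (u * cnj v - v * cnj u) + complex_of_real l2 * (cnj u * v - cnj v * u)) / (2 * \<i>)"
proof -
  obtain u1 u2 where u: "u = Complex u1 u2" by (cases u)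
  obtain v1 v2 where v: "v = Complex v1 v2" by (cases v)
  define R where "R = u1 * v1 + u2 * v2"
  define J where "J = u2 * v1 - u1 * v2"
  have ReZ: "Re Z = (a+b)*R" unfolding Z_def u v R_def by (simp add: algebra_simps)
  have ImZ: "Im Z = (a-b)*J" unfolding Z_def u v J_def by (simp add: algebra_simps)
  have Iu: "Re (I u) = (a+b)*(u1^2+u2^2)" unfolding I_def u by (simp add: algebra_simps power2_eq_square)
  have Iv: "Re (I v) = (a+b)*(v1^2+v2^2)" unfolding I_def v by (simp add: algebra_simps power2_eq_square)
  have lag: "R^2 + J^2 = (u1^2+u2^2)*(v1^2+v2^2)" unfolding R_def J_def by algebra
  have cm: "(cmod Z)\<^sup>2 = (Re Z)^2 + (Im Z)^2" by (simp add: cmod_power2)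
  have ab4: "(a+b)^2 \<le> (a-b)^2"
  proof -
    have "a*b \<le> 0" using ab by (simp add: mult_nonneg_nonpos)
    thus ?thesis by (simp add: power2_eq_square algebra_simps)
  qed
  have c1: "(Re Z)\<^sup>2 \<le> Re (I u) * Re (I v)"
  proof -
    have "(a+b)^2 * R^2 \<le> (a+b)^2 * (R^2 + J^2)" by (simp add: mult_left_mono)
    thus ?thesis unfolding ReZ Iu Iv lag by (simp add: power_mult_distrib algebra_simps power2_eq_square)
  qed
  have c2: "Re (I u) * Re (I v) \<le> (cmod Z)\<^sup>2"
  proof -
    have "(a+b)^2 * J^2 \<le> (a-b)^2 * J^2" using ab4 by (simp add: mult_right_mono)
    hence "(a+b)^2 * (R^2 + J^2) \<le> (a+b)^2 * R^2 + (a-b)^2 * J^2" by (simp add: algebra_simps)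
    moreover have "Re (I u) * Re (I v) = (a+b)^2 * (R^2 + J^2)" unfolding Iu Iv lag by (simp add: power2_eq_square)
    moreover have "(cmod Z)\<^sup>2 = (a+b)^2 * R^2 + (a-b)^2 * J^2" unfolding cm ReZ ImZ by (simp add: power_mult_distrib)
    ultimately show ?thesis by simp
  qed
  have c3: "complex_of_real (Re Z) = (I (u + v) - I (u - v)) / 4"
    unfolding ReZ I_def u v R_def by (simp add: complex_eq_iff algebra_simps)
  have c4: "complex_of_real (Im Z) = (complex_of_real l1 * (u * cnj v - v * cnj u) + complex_of_real l2 * (cnj u * v - cnj v * u)) / (2 * \<i>)"
  proof -
    have "(l1 - l2) * J = (a - b) * J" using dl by simp
    moreover have num: "complex_of_real l1 * (u * cnj v - v * cnj u) + complex_of_real l2 * (cnj u * v - cnj v * u)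
        = 2 * \<i> * complex_of_real ((l1 - l2) * J)"
      unfolding u v J_def by (simp add: complex_eq_iff algebra_simps)
    ultimately show ?thesis unfolding ImZ num using dl by simp
  qed
  show ?thesis using c1 c2 c3 c4 by blast
qed



theorem theorem6:
  fixes s :: ereal and \<rho> X Y :: "complex^2^2"
    and lam :: "nat \<Rightarrow> real" and psi :: "nat \<Rightarrow> complex^2"
  assumes "s \<le> 0"
    and "density2 \<rho>"
    and "hermitian2 X" and "hermitian2 Y"
    and "\<forall>i\<in>{1,2}. \<forall>j\<in>{1,2::nat}. cinner2 (psi i) (psi j) = (if i = j then 1 else 0)"
    and "lam 1 \<ge> lam 2" and "lam 2 \<ge> 0"
    and "\<rho> = lam 1 *\<^sub>R ketbra (psi 1) (psi 1) + lam 2 *\<^sub>R ketbra (psi 2) (psi 2)"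
  shows "(Re (zeta s \<rho> lam psi X Y))\<^sup>2 \<le> Re (Is s \<rho> lam psi X) * Re (Is s \<rho> lam psi Y)
       \<and> Re (Is s \<rho> lam psi X) * Re (Is s \<rho> lam psi Y) \<le> (cmod (zeta s \<rho> lam psi X Y))\<^sup>2
       \<and> complex_of_real (Re (zeta s \<rho> lam psi X Y))
           = (Is s \<rho> lam psi (X + Y) - Is s \<rho> lam psi (X - Y)) / 4
       \<and> complex_of_real (Im (zeta s \<rho> lam psi X Y))
           = ctrace (\<rho> ** (X ** Y - Y ** X)) / (2 * \<i>)"
proof -
  define p where "p = psi 1"
  define q where "q = psi 2"
  have o: "cinner2 p p = 1" "cinner2 q q = 1" "cinner2 p q = 0" "cinner2 q p = 0"
    using assms(5) unfolding p_def q_def by auto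
  have comp: "\<And>i j. psi 1 $ i * cnj (psi 1 $ j) + psi 2 $ i * cnj (psi 2 $ j) = (if i = j then 1 else 0)"
    using complete2[OF o] unfolding p_def q_def by blast
  define m where "m = msmean s (lam 1) (lam 2)"
  define a where "a = lam 1 - m"
  define b where "b = lam 2 - m"
  have mb: "lam 2 \<le> m \<and> m \<le> lam 1" unfolding m_def using msmean_bounds assms by blast
  have ab: "a \<ge> 0" "b \<le> 0" "a - b = lam 1 - lam 2" using mb unfolding a_def b_def by auto
  have adj: "braket q A p = cnj (braket p A q)" if "hermitian2 A" for A
    using braket_adj[of q A p] that unfolding hermitian2_def by simp
  have zf: "zeta s \<rho> lam psi A B = complex_of_real a * braket p A q * cnj (braket p B q)
      + complex_of_real b * cnj (braket p A q) * braket p B q" if "hermitian2 A" "hermitian2 B" for A B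
    using zeta_formula[OF assms(1) that(1) comp assms(6,7,8), of B] adj[OF that(1)] adj[OF that(2)]
    unfolding a_def b_def m_def p_def q_def by simp
  define u where "u = braket p X q"
  define v where "v = braket p Y q"
  have hXY: "hermitian2 (X + Y)" "hermitian2 (X - Y)" using assms(3,4) herm_add herm_diff by auto
  have Z: "zeta s \<rho> lam psi X Y = complex_of_real a * u * cnj v + complex_of_real b * cnj u * v"
    using zf[OF assms(3,4)] unfolding u_def v_def .
  have IX: "Is s \<rho> lam psi X = complex_of_real a * u * cnj u + complex_of_real b * cnj u * u"
    using zf[OF assms(3,3)] unfolding Is_def u_def .
  have IY: "Is s \<rho> lam psi Y = complex_of_real a * v * cnj v + complex_of_real b * cnj v * v"
    using zf[OF assms(4,4)] unfolding Is_def v_def .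
  have IP: "Is s \<rho> lam psi (X + Y) = complex_of_real a * (u + v) * cnj (u + v) + complex_of_real b * cnj (u + v) * (u + v)"
    using zf[OF hXY(1) hXY(1)] unfolding Is_def u_def v_def braket_add .
  have IM: "Is s \<rho> lam psi (X - Y) = complex_of_real a * (u - v) * cnj (u - v) + complex_of_real b * cnj (u - v) * (u - v)"
    using zf[OF hXY(2) hXY(2)] unfolding Is_def u_def v_def braket_diff .
  have T: "ctrace (\<rho> ** (X ** Y - Y ** X)) = complex_of_real (lam 1) * (u * cnj v - v * cnj u) + complex_of_real (lam 2) * (cnj u * v - cnj v * u)"
  proof -
    have "ctrace (\<rho> ** (X ** Y - Y ** X)) = lam 1 * braket p (X ** Y - Y ** X) p + lam 2 * braket q (X ** Y - Y ** X) q"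
      unfolding assms(8) p_def q_def by (rule ctrace_rho)
    also have "\<dots> = complex_of_real (lam 1) * (u * cnj v - v * cnj u) + complex_of_real (lam 2) * (cnj u * v - cnj v * u)"
      unfolding braket_diff braket_mult[OF comp] p_def[symmetric] q_def[symmetric] adj[OF assms(3)] adj[OF assms(4)]
        u_def[symmetric] v_def[symmetric] by (simp add: algebra_simps)
    finally show ?thesis .
  qed
  show ?thesis unfolding Z IX IY IP IM T
    using final_alg[OF ab] by simp
qed


end
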